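(* For $m,n\ge2$, \[ \sum_{k=2}^m\sum_{l=2}^n k!\left\{{m\atop k}\right\}\, l!\left\{{n\atop l}\right\}\,G_{k,l}=1-\frac{m!\,n!}{(m+n-1)!}. \]
   Context: The generalized Gregory coefficients $G_{m,n}$ are defined by $\sum_{m,n\ge0}G_{m,n}x^my^n=\dfrac{y\log^2(1+x)-x\log^2(1+y)}{\log(1+x)-\log(1+y)}$ (formal power series; $\log^ku=(\log u)^k$). $\left\{{n\atop m}\right\}$ are the Stirling numbers of the second kind: $\left\{{n+1\atop m}\right\}=\left\{{n\atop m-1}\right\}+m\left\{{n\atop m}\right\}$, $\left\{{0\atop 0}\right\}=1$, $\left\{{n\atop 0}\right\}=\left\{{0\atop m}\right\}=0$ for $n,m\ne0$. *)

theory Defs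
  imports "HOL-Computational_Algebra.Formal_Power_Series" "HOL-Combinatorics.Stirling"
begin

text \<open>Bivariate formal power series in x and y are represented as elements of
  type real fps fps: the outer variable is x, the coefficients are power series in y.
  The coefficient of x^m y^n of F is fps_nth (fps_nth F m) n.\<close>

definition bvX :: "real fps fps" where "bvX = fps_X"
definition bvY :: "real fps fps" where "bvY = fps_const fps_X"

text \<open>log(1+x) and log(1+y); fps_ln 1 is the series of log(1+z).\<close>
definition logX :: "real fps fps" where "logX = Abs_fps (\<lambda>m. fps_const (fps_nth (fps_ln 1) m))"
definition logY :: "real fps fps" where "logY = fps_const (fps_ln 1)"

text \<open>The generating function of the generalized Gregory coefficients: the formal
  quotient, i.e. the unique series F with F * (log(1+x) - log(1+y)) equal to the numerator
  (unique since the bivariate power series ring is an integral domain).\<close>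
definition gregory_gf :: "real fps fps" where
  "gregory_gf = (THE F. F * (logX - logY) = bvY * logX ^ 2 - bvX * logY ^ 2)"

definition G :: "nat \<Rightarrow> nat \<Rightarrow> real" where
  "G m n = fps_nth (fps_nth gregory_gf m) n"

end

theory Submission
  imports Defs
begin
unbundle fps_syntax

abbreviation EE :: "real fps" where "EE \<equiv> fps_exp 1 - 1"

lemma EE_pow_nth: "(EE ^ k) $ m = fact k * real (Stirling m k) / fact m"
proof (induction m arbitrary: k)
  case 0
  then show ?case by (cases k) (simp_all add: fps_power_nth_Suc)
next
  case (Suc m)
  show ?case
  proof (cases k)
    case 0
    then show ?thesis by simp
  next
    case (Suc j)
    have d: "fps_deriv (EE ^ Suc j) = of_nat (Suc j) * (EE ^ Suc j + EE ^ j)"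
    proof -
      have "fps_deriv EE = EE + 1" by simp
      then have "fps_deriv (EE ^ Suc j) = of_nat (Suc j) * (EE + 1) * EE ^ j"
        by (simp only: fps_deriv_power' diff_Suc_1)
      then show ?thesis by (simp add: algebra_simps)
    qed
    have "of_nat (Suc m) * (EE ^ Suc j) $ Suc m = fps_deriv (EE ^ Suc j) $ m"
      by (simp only: fps_deriv_nth Suc_eq_plus1)
    also have "\<dots> = of_nat (Suc j) * ((EE ^ Suc j) $ m + (EE ^ j) $ m)"
      unfolding d by (simp add: fps_of_nat[symmetric] del: of_nat_Suc)
    also have "\<dots> = of_nat (Suc j) * (fact (Suc j) * real (Stirling m (Suc j)) / fact m + fact j * real (Stirling m j) / fact m)"
      by (simp only: Suc.IH)
    finally have "(EE ^ Suc j) $ Suc m = of_nat (Suc j) * (fact (Suc j) * real (Stirling m (Suc j)) / fact m + fact j * real (Stirling m j) / fact m) / of_nat (Suc m)"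
      by (simp add: field_simps del: of_nat_Suc)
    also have "\<dots> = fact (Suc j) * real (Stirling (Suc m) (Suc j)) / fact (Suc m)"
      by (simp add: field_simps)
    finally show ?thesis using Suc by simp
  qed
qed

definition iota :: "real fps \<Rightarrow> real fps fps" where
  "iota f = Abs_fps (\<lambda>m. fps_const (f $ m))"
definition cin :: "real fps fps \<Rightarrow> real fps \<Rightarrow> real fps fps" where
  "cin F e = Abs_fps (\<lambda>m. F $ m oo e)"
definition Psi :: "real fps fps \<Rightarrow> real fps \<Rightarrow> real fps fps" where
  "Psi F e = cin F e oo iota e"

lemma iota_nth [simp]: "iota f $ m = fps_const (f $ m)"
  by (simp add: iota_def)
lemma cin_nth [simp]: "cin F e $ m = F $ m oo e"
  by (simp add: cin_def)

lemma fps_const_sum': "fps_const (\<Sum>i\<in>A. f i) = (\<Sum>i\<in>A. fps_const (f i))"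
  by (induction A rule: infinite_finite_induct) (simp_all flip: fps_const_add)

lemma iota_mult: "iota (f * g) = iota f * iota g"
  by (rule fps_ext) (simp add: fps_mult_nth fps_const_sum')

lemma iota_add: "iota (f + g) = iota f + iota g"
  by (rule fps_ext) (simp flip: fps_const_add)

lemma iota_1: "iota 1 = 1"
  by (rule fps_ext) (simp add: fps_one_nth)

lemma iota_power: "iota (f ^ k) = iota f ^ k"
  by (induction k) (simp_all add: iota_1 iota_mult)

lemma iota_X: "iota fps_X = fps_X"
  by (rule fps_ext) (simp add: fps_X_def)

lemma iota_compose: "iota (f oo g) = iota f oo iota g"
  by (rule fps_ext) (simp add: fps_compose_nth fps_const_sum' flip: iota_power)

lemma cin_mult: assumes "e $ 0 = 0" shows "cin (A * B) e = cin A e * cin B e"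
  by (rule fps_ext) (simp add: fps_mult_nth fps_compose_sum_distrib fps_compose_mult_distrib[OF assms])

lemma cin_diff: "cin (A - B) e = cin A e - cin B e"
  by (rule fps_ext) (simp add: fps_compose_sub_distrib)

lemma cin_iota: "cin (iota f) e = iota f"
  by (rule fps_ext) simp

lemma cin_const: "cin (fps_const c) e = fps_const (c oo e)"
  by (rule fps_ext) simp

lemma Psi_mult: assumes "e $ 0 = 0" shows "Psi (A * B) e = Psi A e * Psi B e"
  unfolding Psi_def using assms by (simp add: cin_mult fps_compose_mult_distrib)

lemma Psi_diff: "Psi (A - B) e = Psi A e - Psi B e"
  unfolding Psi_def by (simp add: cin_diff fps_compose_sub_distrib)

lemma Psi_iota: "Psi (iota f) e = iota (f oo e)"
  unfolding Psi_def by (simp add: cin_iota iota_compose)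

lemma Psi_const: "Psi (fps_const c) e = fps_const (c oo e)"
  unfolding Psi_def by (simp add: cin_const)

lemma Psi_nth: "Psi F e $ m $ n = (\<Sum>k=0..m. \<Sum>l=0..n. F $ k $ l * (e ^ l) $ n * (e ^ k) $ m)"
  unfolding Psi_def
  by (simp add: fps_compose_nth fps_sum_nth sum_distrib_right flip: iota_power)

lemma Psi_power: assumes "e $ 0 = 0" shows "Psi (A ^ k) e = Psi A e ^ k"
proof (induction k)
  case 0
  have "Psi (fps_const 1) e = fps_const (1 oo e)" by (rule Psi_const)
  then show ?case by simp
next
  case (Suc k)
  then show ?case by (simp add: Psi_mult[OF assms])
qed

abbreviation LL :: "real fps" where "LL \<equiv> fps_ln 1"

lemma LL_EE: "LL oo EE = fps_X"
  using fps_inv_fps_exp_compose(1)[of "1::real"] fps_ln_fps_exp_inv[of "1::real"] by simp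
lemma EE_LL: "EE oo LL = fps_X"
  using fps_inv_fps_exp_compose(2)[of "1::real"] fps_ln_fps_exp_inv[of "1::real"] by simp

lemma logX_eq: "logX = iota LL" by (simp add: logX_def iota_def)
lemma logY_eq: "logY = fps_const LL" by (simp add: logY_def)
lemma bvX_eq: "bvX = iota fps_X" by (simp add: bvX_def iota_X)
lemma bvY_eq: "bvY = fps_const fps_X" by (simp add: bvY_def)

definition hh :: "nat \<Rightarrow> nat \<Rightarrow> real" where
  "hh m n = (if m = 1 \<and> n = 1 then 1 else if m \<ge> 2 \<and> n \<ge> 2 then - 1 / fact (m + n - 1) else 0)"
definition H0 :: "real fps fps" where "H0 = Abs_fps (\<lambda>m. Abs_fps (\<lambda>n. hh m n))"
definition PP :: "real fps fps" where
  "PP = fps_const EE * iota fps_X ^ 2 - iota EE * fps_const fps_X ^ 2"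
definition DD :: "real fps fps" where "DD = iota fps_X - fps_const fps_X"

lemma PP_LL: "Psi PP LL = bvY * logX ^ 2 - bvX * logY ^ 2"
  unfolding PP_def by (simp add: Psi_diff Psi_mult Psi_power Psi_const Psi_iota EE_LL logX_eq logY_eq bvX_eq bvY_eq flip: fps_compose_power)
lemma DD_LL: "Psi DD LL = logX - logY"
  unfolding DD_def by (simp add: Psi_diff Psi_const Psi_iota logX_eq logY_eq)
lemma N_EE: "Psi (bvY * logX ^ 2 - bvX * logY ^ 2) EE = PP"
  unfolding PP_def by (simp add: Psi_diff Psi_mult Psi_power Psi_const Psi_iota LL_EE logX_eq logY_eq bvX_eq bvY_eq flip: fps_compose_power)
lemma D_EE: "Psi (logX - logY) EE = DD"
  unfolding DD_def by (simp add: Psi_diff Psi_const Psi_iota LL_EE logX_eq logY_eq)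

lemma PP_nth: "PP $ m $ n = (if m = 2 \<and> n \<ge> 1 then 1 / fact n else 0) - (if n = 2 \<and> m \<ge> 1 then 1 / fact m else 0)"
  unfolding PP_def iota_X power2_eq_square mult.assoc[symmetric]
  by (simp add: fps_X_nth)

lemma H0DD_nth: "(H0 * DD) $ m $ n = (if m = 0 then 0 else hh (m - 1) n) - (if n = 0 then 0 else hh m (n - 1))"
  unfolding DD_def iota_X by (simp add: algebra_simps H0_def)

lemma H0DD: "H0 * DD = PP"
proof (rule fps_ext, rule fps_ext)
  fix m n
  show "(H0 * DD) $ m $ n = PP $ m $ n"
    unfolding H0DD_nth PP_nth hh_def
    by (cases "m = 0"; cases "n = 0"; cases "m = 1"; cases "n = 1"; cases "m = 2"; cases "n = 2")
       (auto simp: fact_numeral)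
qed

lemma D_ne: "logX - logY \<noteq> 0"
proof
  assume "logX - logY = 0"
  then have "(logX - logY) $ 1 $ 0 = 0" by simp
  then show False by (simp add: logX_eq logY_eq fps_ln_nth)
qed

lemma DD_ne: "DD \<noteq> 0"
proof
  assume "DD = 0"
  then have "DD $ 1 $ 0 = 0" by simp
  then show False by (simp add: DD_def)
qed

lemma key_LL: "Psi H0 LL * (logX - logY) = bvY * logX ^ 2 - bvX * logY ^ 2"
proof -
  have "Psi H0 LL * (logX - logY) = Psi (H0 * DD) LL"
    by (simp add: Psi_mult DD_LL)
  also have "\<dots> = bvY * logX ^ 2 - bvX * logY ^ 2" by (simp add: H0DD PP_LL)
  finally show ?thesis .
qed

lemma greg_eq: "gregory_gf = Psi H0 LL"
  unfolding gregory_gf_def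
proof (rule the_equality)
  show "Psi H0 LL * (logX - logY) = bvY * logX ^ 2 - bvX * logY ^ 2" by (rule key_LL)
  fix F assume "F * (logX - logY) = bvY * logX ^ 2 - bvX * logY ^ 2"
  then have "F * (logX - logY) = Psi H0 LL * (logX - logY)" by (simp add: key_LL)
  then show "F = Psi H0 LL" using D_ne by simp
qed

lemma greg_EE: "Psi gregory_gf EE = H0"
proof -
  have "gregory_gf * (logX - logY) = bvY * logX ^ 2 - bvX * logY ^ 2"
    by (simp add: greg_eq key_LL)
  then have "Psi gregory_gf EE * DD = PP"
    by (metis Psi_mult D_EE N_EE fps_exp_nth diff_0_right fps_sub_nth fps_one_nth power_0 fact_0 of_nat_1 div_by_1 diff_self)
  then have "Psi gregory_gf EE * DD = H0 * DD" by (simp add: H0DD)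
  then show ?thesis using DD_ne by simp
qed

lemma T_eq: "(\<Sum>k=0..m. \<Sum>l=0..n. fact k * real (Stirling m k) * (fact l * real (Stirling n l)) * G k l)
    = fact m * fact n * hh m n"
proof -
  have "hh m n = H0 $ m $ n" by (simp add: H0_def)
  also have "\<dots> = (\<Sum>k=0..m. \<Sum>l=0..n. G k l * (fact l * real (Stirling n l) / fact n) * (fact k * real (Stirling m k) / fact m))"
    by (simp add: greg_EE[symmetric] Psi_nth EE_pow_nth G_def)
  finally have "fact m * fact n * hh m n = (\<Sum>k=0..m. \<Sum>l=0..n. fact m * fact n * (G k l * (fact l * real (Stirling n l) / fact n) * (fact k * real (Stirling m k) / fact m)))"
    by (simp add: sum_distrib_left)
  also have "\<dots> = (\<Sum>k=0..m. \<Sum>l=0..n. fact k * real (Stirling m k) * (fact l * real (Stirling n l)) * G k l)"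
    by (intro sum.cong refl) (simp add: field_simps)
  finally show ?thesis by simp
qed

lemma sum_split2: "(m::nat) \<ge> 2 \<Longrightarrow> (\<Sum>k=0..m. g k) = g 0 + g 1 + (\<Sum>k=2..m. (g k :: real))"
  by (simp add: sum.atLeast_Suc_atMost numeral_2_eq_2)

theorem theorem5p5:
  fixes m n :: nat
  assumes "m \<ge> 2" and "n \<ge> 2"
  shows "(\<Sum>k=2..m. \<Sum>l=2..n. fact k * real (Stirling m k) * (fact l * real (Stirling n l)) * G k l)
         = 1 - fact m * fact n / fact (m + n - 1)"
proof -
  let ?f = "\<lambda>m n k l. fact k * real (Stirling m k) * (fact l * real (Stirling n l)) * G k l"
  obtain m' where m: "m = Suc (Suc m')" using assms(1) by (metis add_2_eq_Suc le_Suc_ex)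
  obtain n' where n: "n = Suc (Suc n')" using assms(2) by (metis add_2_eq_Suc le_Suc_ex)
  have S: "Stirling m 0 = 0" "Stirling n 0 = 0" "Stirling m (Suc 0) = 1" "Stirling n (Suc 0) = 1"
    by (simp_all only: m n Stirling_1 Stirling.simps(3) One_nat_def)
  have A: "(\<Sum>k=0..m. \<Sum>l=0..n. ?f m n k l) = (\<Sum>l=0..n. ?f 1 n 1 l)
       + (\<Sum>k=2..m. ?f m 1 k 1) + (\<Sum>k=2..m. \<Sum>l=2..n. ?f m n k l)"
    using assms by (simp add: sum_split2 sum.distrib S)
  have B: "(\<Sum>k=0..1. \<Sum>l=0..n. ?f 1 n k l) = (\<Sum>l=0..n. ?f 1 n 1 l)"
    by simp
  have C: "(\<Sum>k=0..m. \<Sum>l=0..1. ?f m 1 k l) = G 1 1 + (\<Sum>k=2..m. ?f m 1 k 1)"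
    using assms by (simp add: sum_split2 S)
  have D: "(\<Sum>k=0..1. \<Sum>l=0..1. ?f 1 1 k l) = G 1 1"
    by simp
  have hmn: "hh m n = - 1 / fact (m + n - 1)" using assms by (simp add: hh_def)
  have h1n: "hh 1 n = 0" "hh m 1 = 0" "hh 1 1 = 1" using assms by (simp_all add: hh_def)
  have "(\<Sum>k=2..m. \<Sum>l=2..n. ?f m n k l) = (\<Sum>k=0..m. \<Sum>l=0..n. ?f m n k l)
      - (\<Sum>k=0..1. \<Sum>l=0..n. ?f 1 n k l) - (\<Sum>k=0..m. \<Sum>l=0..1. ?f m 1 k l)
      + (\<Sum>k=0..1. \<Sum>l=0..1. ?f 1 1 k l)"
    using A B C D by simp
  also have "\<dots> = fact m * fact n * hh m n - fact 1 * fact n * hh 1 n - fact m * fact 1 * hh m 1 + fact 1 * fact 1 * hh 1 1"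
    by (simp only: T_eq)
  also have "\<dots> = 1 - fact m * fact n / fact (m + n - 1)"
    by (simp only: hmn h1n fact_1) simp
  finally show ?thesis .
qed

end
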